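(* For any $\varepsilon>0$ there exist $\beta>1$ and $n_0$ such that every graph $G$ on $n\ge n_0$ vertices with $(\beta,\beta^{-1})$-expansion satisfies $\mathrm{spr}(G)<1/4+\varepsilon$.
   Context: For $T\subseteq V$, $N(T)$ is the set of vertices adjacent to some vertex of $T$. A graph $G=(V,E)$ has $(\beta,\eta)$-expansion if every $T\subset V$ with $|T|\le(1-\eta)|V|/\beta$ satisfies $|T\cup N(T)|\ge\beta|T|$. A Lipschitz function on $G$ is $f:V\to\mathbb{R}$ with $|f(v)-f(w)|\le1$ for adjacent $v,w$; $\mathrm{Var}(f)$ is the variance of $f(X)$ for $X$ uniform on $V$; $\mathrm{spr}(G)$ is the supremum of $\mathrm{Var}(f)$ over Lipschitz $f$. *)

theory Defs
  imports "HOL-Analysis.Analysis" "HOL-Library.Extended_Real"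
begin

definition simple_graph :: "'a set \<Rightarrow> ('a \<Rightarrow> 'a \<Rightarrow> bool) \<Rightarrow> bool" where
  "simple_graph V E \<longleftrightarrow> finite V \<and> (\<forall>v w. E v w \<longrightarrow> v \<in> V \<and> w \<in> V)
      \<and> (\<forall>v w. E v w \<longrightarrow> E w v) \<and> (\<forall>v. \<not> E v v)"

definition nbhd :: "'a set \<Rightarrow> ('a \<Rightarrow> 'a \<Rightarrow> bool) \<Rightarrow> 'a set \<Rightarrow> 'a set" where
  "nbhd V E T = {v \<in> V. \<exists>t\<in>T. E t v}"

definition has_expansion :: "'a set \<Rightarrow> ('a \<Rightarrow> 'a \<Rightarrow> bool) \<Rightarrow> real \<Rightarrow> real \<Rightarrow> bool" where
  "has_expansion V E \<beta> \<eta> \<longleftrightarrow>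
     (\<forall>T. T \<subseteq> V \<and> real (card T) \<le> (1 - \<eta>) * real (card V) / \<beta>
        \<longrightarrow> real (card (T \<union> nbhd V E T)) \<ge> \<beta> * real (card T))"

definition lipschitz_graph :: "'a set \<Rightarrow> ('a \<Rightarrow> 'a \<Rightarrow> bool) \<Rightarrow> ('a \<Rightarrow> real) \<Rightarrow> bool" where
  "lipschitz_graph V E f \<longleftrightarrow> (\<forall>v\<in>V. \<forall>w\<in>V. E v w \<longrightarrow> \<bar>f v - f w\<bar> \<le> 1)"

definition unif_var :: "'a set \<Rightarrow> ('a \<Rightarrow> real) \<Rightarrow> real" where
  "unif_var V f = (let m = (\<Sum>v\<in>V. f v) / real (card V) in
                    (\<Sum>v\<in>V. (f v - m)^2) / real (card V))"

definition spr :: "'a set \<Rightarrow> ('a \<Rightarrow> 'a \<Rightarrow> bool) \<Rightarrow> ereal" where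
  "spr V E = (SUP f\<in>{f. lipschitz_graph V E f}. ereal (unif_var V f))"

end

theory Submission
  imports Defs
begin

lemma pow2_ge: "real k + 1 \<le> 2 ^ k"
proof (induction k)
  case (Suc k) then show ?case by simp
qed simp

lemma wterm:
  assumes "(\<beta>::real) \<ge> 4"
  shows "(2 * real k + 2) / \<beta> ^ k \<le> 2 * (1/2) ^ k"
proof -
  have "(2 * real k + 2) / \<beta> ^ k \<le> (2 * real k + 2) / 4 ^ k"
    using assms by (intro divide_left_mono power_mono) auto
  also have "\<dots> = 2 * ((real k + 1) / 2^k) * (1/2)^k"
    by (simp add: power_divide field_simps flip: power_mult_distrib)
  also have "\<dots> \<le> 2 * 1 * (1/2)^k"
    using pow2_ge[of k] by (intro mult_right_mono mult_left_mono) auto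
  finally show ?thesis by simp
qed

lemma wsum:
  assumes "(\<beta>::real) \<ge> 4"
  shows "(\<Sum>k<K. (2 * real k + 2) / \<beta> ^ k) \<le> 4"
proof -
  have "(\<Sum>k<K. (2 * real k + 2) / \<beta> ^ k) \<le> (\<Sum>k<K. 2 * (1/2::real) ^ k)"
    by (intro sum_mono wterm assms)
  also have "\<dots> = 2 * (\<Sum>k<K. (1/2::real) ^ k)" by (simp add: sum_distrib_left)
  also have "\<dots> \<le> 2 * 2"
    using geometric_sum_less[of "1/2::real" "{..<K}"] by simp
  finally show ?thesis by simp
qed

lemma sum_lin: "(\<Sum>k<(j::nat). 2 * real k + 2) = real j ^ 2 + real j"
  by (induction j) (auto simp: power2_eq_square algebra_simps)

lemma pointwise:
  fixes d :: real
  assumes "\<bar>d\<bar> \<le> real K"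
  shows "(d - 1/2)^2 \<le> 1/4 + (\<Sum>k<K. (2 * real k + 2) * of_bool (d > 1 + real k))
                          + (\<Sum>k<K. (2 * real k + 2) * of_bool (d < - real k))"
proof -
  have nn1: "0 \<le> (\<Sum>k<K. (2 * real k + 2) * of_bool (d > 1 + real k))"
    by (intro sum_nonneg) auto
  have nn2: "0 \<le> (\<Sum>k<K. (2 * real k + 2) * of_bool (d < - real k))"
    by (intro sum_nonneg) auto
  have conv: "(\<Sum>k<K. (2 * real k + 2) * of_bool (P k)) = (\<Sum>k\<in>{k. k < K \<and> P k}. 2 * real k + 2)" for P
    by (simp add: sum.inter_filter[symmetric] of_bool_def if_distrib cong: if_cong)
  consider "0 \<le> d \<and> d \<le> 1" | "d > 1" | "d < 0" by linarith
  then show ?thesis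
  proof cases
    case 1
    then have "d*(d-1) \<le> 0" by (intro mult_nonneg_nonpos) auto
    then have "(d - 1/2)^2 \<le> 1/4" by (simp add: power2_eq_square algebra_simps)
    then show ?thesis using nn1 nn2 by linarith
  next
    case 2
    define j where "j = nat (\<lceil>d\<rceil> - 1)"
    have "\<lceil>d\<rceil> \<ge> 2" using 2 by linarith
    then have rj: "real j = of_int \<lceil>d\<rceil> - 1" unfolding j_def by simp
    have jd: "real j < d" "d \<le> real j + 1" unfolding rj by linarith+
    have jK: "j \<le> K" using jd assms by linarith
    have set: "{k. k < K \<and> d > 1 + real k} = {..<j}"
      using jd jK by (auto; linarith)
    have z: "(\<Sum>k<K. (2 * real k + 2) * of_bool (d < - real k)) = 0"
      using 2 by (intro sum.neutral) auto
    have "(d - 1/2)^2 \<le> (real j + 1/2)^2"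
      using jd 2 by (intro power_mono) auto
    also have "\<dots> = 1/4 + (real j ^ 2 + real j)" by (simp add: power2_eq_square algebra_simps)
    finally show ?thesis unfolding z conv set sum_lin by simp
  next
    case 3
    define j where "j = nat \<lceil>-d\<rceil>"
    have jd: "- d \<le> real j" "real j < -d + 1" using 3 unfolding j_def
      by linarith+
    have jK: "j \<le> K" using jd assms unfolding j_def by linarith
    have set: "{k. k < K \<and> d < - real k} = {..<j}"
      using jd jK by (auto; linarith)
    have z: "(\<Sum>k<K. (2 * real k + 2) * of_bool (d > 1 + real k)) = 0"
      using 3 by (intro sum.neutral) auto
    have "(d - 1/2)^2 = (1/2 - d)^2" by (simp add: power2_eq_square algebra_simps)
    also have "\<dots> \<le> (real j + 1/2)^2"
      using jd 3 by (intro power_mono) auto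
    also have "\<dots> = 1/4 + (real j ^ 2 + real j)" by (simp add: power2_eq_square algebra_simps)
    finally show ?thesis unfolding z conv set sum_lin by simp
  qed
qed


lemma sum_of_bool_card:
  "finite V \<Longrightarrow> (\<Sum>v\<in>V. (of_bool (P v)::real)) = real (card {v\<in>V. P v})"
  by (simp add: of_bool_def sum.If_cases Int_def)

lemma swap_card:
  assumes "finite V"
  shows "(\<Sum>v\<in>V. \<Sum>k<K. (w k::real) * of_bool (P v k)) = (\<Sum>k<K. w k * real (card {v\<in>V. P v k}))"
proof -
  have "(\<Sum>v\<in>V. \<Sum>k<K. (w k::real) * of_bool (P v k)) = (\<Sum>k<K. \<Sum>v\<in>V. w k * of_bool (P v k))"
    by (rule sum.swap)
  also have "\<dots> = (\<Sum>k<K. w k * (\<Sum>v\<in>V. of_bool (P v k)))"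
    by (simp add: sum_distrib_left)
  also have "\<dots> = (\<Sum>k<K. w k * real (card {v\<in>V. P v k}))"
    by (simp only: sum_of_bool_card[OF assms])
  finally show ?thesis .
qed

lemma var_le:
  assumes "finite V"
  shows "unif_var V f \<le> (\<Sum>v\<in>V. (f v - c)^2) / real (card V)"
proof (cases "card V = 0")
  case True then show ?thesis by (simp add: unif_var_def Let_def)
next
  case False
  define m where "m = (\<Sum>v\<in>V. f v) / real (card V)"
  have s0: "(\<Sum>v\<in>V. f v - m) = 0"
    using False by (simp add: sum_subtractf m_def)
  have "(\<Sum>v\<in>V. (f v - c)^2) = (\<Sum>v\<in>V. (f v - m)^2 + 2*(m-c)*(f v - m) + (m-c)^2)"
    by (intro sum.cong) (auto simp: power2_eq_square algebra_simps)
  also have "\<dots> = (\<Sum>v\<in>V. (f v - m)^2) + 2*(m-c)*(\<Sum>v\<in>V. f v - m) + real (card V) * (m-c)^2"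
    by (simp add: sum.distrib sum_distrib_left)
  also have "\<dots> \<ge> (\<Sum>v\<in>V. (f v - m)^2)" using s0 by simp
  finally have "(\<Sum>v\<in>V. (f v - m)^2) \<le> (\<Sum>v\<in>V. (f v - c)^2)" .
  then show ?thesis unfolding unif_var_def Let_def m_def[symmetric]
    by (intro divide_right_mono) auto
qed

lemma expand:
  assumes sg: "simple_graph V E" and ex: "has_expansion V E \<beta> (1/\<beta>)" and b1: "\<beta> \<ge> 1"
    and AV: "A \<subseteq> V" and BV: "B \<subseteq> V" and AB: "A \<union> nbhd V E A \<subseteq> B"
  shows "real (card B) \<ge> \<beta> * real (card A) \<or> real (card B) \<ge> (1 - 1/\<beta>) * real (card V) - \<beta>"
proof -
  have fin: "finite V" using sg by (simp add: simple_graph_def)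
  define cap where "cap = (1 - 1/\<beta>) * real (card V) / \<beta>"
  have cap0: "cap \<ge> 0" unfolding cap_def using b1
    by (intro divide_nonneg_pos mult_nonneg_nonneg) (auto simp: field_simps)
  have cardB: "card (A \<union> nbhd V E A) \<le> card B"
    using AB BV fin by (intro card_mono) (auto intro: finite_subset)
  show ?thesis
  proof (cases "real (card A) \<le> cap")
    case True
    then have "real (card (A \<union> nbhd V E A)) \<ge> \<beta> * real (card A)"
      using ex AV unfolding has_expansion_def cap_def by blast
    then show ?thesis using cardB by linarith
  next
    case False
    have "nat \<lfloor>cap\<rfloor> \<le> card A" using False cap0 by linarith
    then obtain A' where A': "A' \<subseteq> A" "card A' = nat \<lfloor>cap\<rfloor>"
      by (metis obtain_subset_with_card_n)
    have rA': "real (card A') \<le> cap" "real (card A') \<ge> cap - 1"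
      using A'(2) cap0 by linarith+
    then have "real (card (A' \<union> nbhd V E A')) \<ge> \<beta> * real (card A')"
      using ex A' AV unfolding has_expansion_def cap_def by blast
    moreover have "card (A' \<union> nbhd V E A') \<le> card B"
    proof -
      have "A' \<union> nbhd V E A' \<subseteq> A \<union> nbhd V E A" using A' by (auto simp: nbhd_def)
      then show ?thesis using AB BV fin by (intro card_mono) (auto intro: finite_subset)
    qed
    moreover have "\<beta> * real (card A') \<ge> \<beta> * (cap - 1)"
      using rA' b1 by (intro mult_left_mono) auto
    moreover have "\<beta> * (cap - 1) = (1 - 1/\<beta>) * real (card V) - \<beta>"
      unfolding cap_def using b1 by (simp add: field_simps)
    ultimately show ?thesis by linarith
  qed
qed


lemma main_bound:
  assumes sg: "simple_graph V E" and ex: "has_expansion V E \<beta> (1/\<beta>)" and b4: "\<beta> \<ge> 4"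
    and nbig: "real (card V) > 4 * \<beta>" and lip: "lipschitz_graph V E f"
  shows "unif_var V f \<le> 1/4 + 8/\<beta> + 4*\<beta>/real (card V)"
proof -
  have fin: "finite V" using sg by (simp add: simple_graph_def)
  define n where "n = real (card V)"
  define cap0 where "cap0 = n/\<beta> + \<beta>"
  have bpos: "\<beta> > 0" using b4 by simp
  have npos: "n > 0" using nbig b4 unfolding n_def by linarith
  have Vne: "V \<noteq> {}" using npos fin unfolding n_def by auto
  have q1: "n/\<beta> \<le> n/4" using npos b4 by (intro divide_left_mono) auto
  have expr: "(1 - 1/\<beta>) * n - \<beta> = n - n/\<beta> - \<beta>" by (simp add: algebra_simps)
  have capineq: "cap0 < (1 - 1/\<beta>) * n - \<beta>"
    unfolding expr cap0_def using q1 nbig n_def by linarith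
  have "n/\<beta> \<ge> 0" using npos bpos by simp
  then have capn: "cap0 < n" using capineq expr bpos by linarith
  have cap0nn: "cap0 \<ge> 0" unfolding cap0_def using npos bpos by simp
  define S where "S = {a \<in> f ` V. real (card {w\<in>V. f w < a}) \<le> cap0}"
  have finS: "finite S" unfolding S_def using fin by auto
  have "Min (f ` V) \<in> S"
  proof -
    have e: "{w\<in>V. f w < Min (f ` V)} = {}" using fin
      by (auto dest!: Min_le[of "f ` V", OF finite_imageI] simp: not_less[symmetric])
    moreover have "Min (f ` V) \<in> f ` V" using fin Vne by (intro Min_in) auto
    then show ?thesis unfolding S_def using cap0nn by (intro CollectI conjI) (auto simp only: e card.empty of_nat_0)
  qed
  then have Sne: "S \<noteq> {}" by auto
  define xs where "xs = Max S"
  have xsS: "xs \<in> S" unfolding xs_def using finS Sne by simp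
  have factA: "real (card {w\<in>V. f w < xs}) \<le> cap0" using xsS unfolding S_def by simp
  have factB: "real (card {w\<in>V. f w \<le> xs}) > cap0"
  proof (cases "\<exists>v\<in>V. f v > xs")
    case True
    define a' where "a' = Min {a \<in> f ` V. a > xs}"
    have fa: "finite {a \<in> f ` V. a > xs}" using fin by auto
    have nea: "{a \<in> f ` V. a > xs} \<noteq> {}" using True by auto
    have a'in: "a' \<in> f ` V" "a' > xs" using Min_in[OF fa nea] unfolding a'_def by auto
    have eq: "{w\<in>V. f w < a'} = {w\<in>V. f w \<le> xs}"
    proof safe
      fix w assume "w \<in> V" "f w < a'"
      show "f w \<le> xs"
      proof (rule ccontr)
        assume "\<not> f w \<le> xs"
        then have "a' \<le> f w" unfolding a'_def using fa \<open>w\<in>V\<close> by (intro Min_le) auto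
        then show False using \<open>f w < a'\<close> by simp
      qed
    next
      fix w assume "w \<in> V" "f w \<le> xs" then show "f w < a'" using a'in by simp
    qed
    have "a' \<notin> S"
    proof
      assume "a' \<in> S"
      then have "a' \<le> xs" unfolding xs_def using finS by simp
      then show False using a'in by simp
    qed
    then show ?thesis using a'in eq unfolding S_def by auto
  next
    case False
    then have "{w\<in>V. f w \<le> xs} = V" by force
    then show ?thesis using capn n_def by simp
  qed
  have nb: "nbhd V E A \<subseteq> {v\<in>V. f v > x}" if "A \<subseteq> {v\<in>V. f v > x + 1}" for A x
  proof
    fix v assume "v \<in> nbhd V E A"
    then obtain t where t: "t \<in> A" "E t v" "v \<in> V" unfolding nbhd_def by auto
    have "\<bar>f t - f v\<bar> \<le> 1" using lip t that unfolding lipschitz_graph_def by auto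
    then show "v \<in> {v\<in>V. f v > x}" using t that by auto
  qed
  have nb2: "nbhd V E A \<subseteq> {v\<in>V. f v < y}" if "A \<subseteq> {v\<in>V. f v < y - 1}" for A y
  proof
    fix v assume "v \<in> nbhd V E A"
    then obtain t where t: "t \<in> A" "E t v" "v \<in> V" unfolding nbhd_def by auto
    have "\<bar>f t - f v\<bar> \<le> 1" using lip t that unfolding lipschitz_graph_def by auto
    then show "v \<in> {v\<in>V. f v < y}" using t that by auto
  qed
  have upstep: "\<beta> * real (card {v\<in>V. f v > x + 1}) \<le> real (card {v\<in>V. f v > x})" if "x \<ge> xs" for x
  proof -
    have AB: "{v\<in>V. f v > x + 1} \<union> nbhd V E {v\<in>V. f v > x + 1} \<subseteq> {v\<in>V. f v > x}"
      using nb[of "{v\<in>V. f v > x + 1}" x] by auto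
    have split: "card {v\<in>V. f v > x} + card {v\<in>V. f v \<le> x} = card V"
      using fin by (subst card_Un_disjoint[symmetric]) (auto intro: arg_cong[where f=card])
    have "card {v\<in>V. f v \<le> xs} \<le> card {v\<in>V. f v \<le> x}"
      using fin that by (intro card_mono) auto
    then have "real (card {v\<in>V. f v > x}) < n - cap0" using split factB n_def by linarith
    then have "\<not> real (card {v\<in>V. f v > x}) \<ge> (1 - 1/\<beta>) * n - \<beta>"
      using expr cap0_def by linarith
    then show ?thesis using expand[OF sg ex _ _ _ AB] b4 n_def by auto
  qed
  have uptail: "real (card {v\<in>V. f v > xs + real k}) \<le> n / \<beta>^k" for k
  proof (induction k)
    case 0 then show ?case using fin n_def by (simp add: card_mono)
  next
    case (Suc k)
    have "\<beta> * real (card {v\<in>V. f v > xs + real k + 1}) \<le> real (card {v\<in>V. f v > xs + real k})"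
      by (intro upstep) simp
    also have "\<dots> \<le> n / \<beta>^k" by (rule Suc)
    finally have "real (card {v\<in>V. f v > xs + real k + 1}) \<le> n / \<beta>^k / \<beta>"
      using bpos by (simp add: field_simps)
    then show ?case by (simp add: algebra_simps)
  qed
  have lowstep: "\<beta> * real (card {v\<in>V. f v < y - 1}) \<le> real (card {v\<in>V. f v < y})" if "y \<le> xs" for y
  proof -
    have AB: "{v\<in>V. f v < y - 1} \<union> nbhd V E {v\<in>V. f v < y - 1} \<subseteq> {v\<in>V. f v < y}"
      using nb2[of "{v\<in>V. f v < y - 1}" y] by auto
    have "card {v\<in>V. f v < y} \<le> card {v\<in>V. f v < xs}"
      using fin that by (intro card_mono) auto
    then have "real (card {v\<in>V. f v < y}) < (1 - 1/\<beta>) * n - \<beta>" using factA capineq by linarith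
    then show ?thesis using expand[OF sg ex _ _ _ AB] b4 n_def by auto
  qed
  have lowtail: "real (card {v\<in>V. f v < xs - real k}) \<le> cap0 / \<beta>^k" for k
  proof (induction k)
    case 0 then show ?case using factA by simp
  next
    case (Suc k)
    have "\<beta> * real (card {v\<in>V. f v < xs - real k - 1}) \<le> real (card {v\<in>V. f v < xs - real k})"
      by (intro lowstep) simp
    also have "\<dots> \<le> cap0 / \<beta>^k" by (rule Suc)
    finally have "real (card {v\<in>V. f v < xs - real k - 1}) \<le> cap0 / \<beta>^k / \<beta>"
      using bpos by (simp add: field_simps)
    then show ?case by (simp add: algebra_simps)
  qed
  define K where "K = nat \<lceil>\<Sum>v\<in>V. \<bar>f v - xs\<bar>\<rceil>"
  have Kb: "\<bar>f v - xs\<bar> \<le> real K" if "v \<in> V" for v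
  proof -
    have "\<bar>f v - xs\<bar> \<le> (\<Sum>v\<in>V. \<bar>f v - xs\<bar>)"
      using fin that by (intro member_le_sum) auto
    then show ?thesis unfolding K_def by linarith
  qed
  define w where "w = (\<lambda>k::nat. 2 * real k + 2)"
  have "(\<Sum>v\<in>V. (f v - (xs + 1/2))^2) \<le>
        (\<Sum>v\<in>V. 1/4 + (\<Sum>k<K. w k * of_bool (f v - xs > 1 + real k))
                          + (\<Sum>k<K. w k * of_bool (f v - xs < - real k)))"
    unfolding w_def
    by (intro sum_mono) (use pointwise[OF Kb] in \<open>auto simp: algebra_simps\<close>)
  also have "\<dots> = n/4 + (\<Sum>k<K. w k * real (card {v\<in>V. f v - xs > 1 + real k}))
                    + (\<Sum>k<K. w k * real (card {v\<in>V. f v - xs < - real k}))"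
    by (simp only: sum.distrib swap_card[OF fin]) (simp add: n_def)
  also have "\<dots> \<le> n/4 + (\<Sum>k<K. w k * (n/\<beta> / \<beta>^k)) + (\<Sum>k<K. w k * (cap0 / \<beta>^k))"
  proof -
    have "(\<Sum>k<K. w k * real (card {v\<in>V. f v - xs > 1 + real k})) \<le> (\<Sum>k<K. w k * (n/\<beta> / \<beta>^k))"
    proof (intro sum_mono mult_left_mono)
      fix k
      have "{v\<in>V. f v - xs > 1 + real k} = {v\<in>V. f v > xs + real (Suc k)}" by auto
      then show "real (card {v\<in>V. f v - xs > 1 + real k}) \<le> n/\<beta> / \<beta>^k"
        using uptail[of "Suc k"] by (simp add: field_simps)
    qed (simp add: w_def)
    moreover have "(\<Sum>k<K. w k * real (card {v\<in>V. f v - xs < - real k})) \<le> (\<Sum>k<K. w k * (cap0 / \<beta>^k))"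
    proof (intro sum_mono mult_left_mono)
      fix k
      have "{v\<in>V. f v - xs < - real k} = {v\<in>V. f v < xs - real k}" by auto
      then show "real (card {v\<in>V. f v - xs < - real k}) \<le> cap0 / \<beta>^k"
        using lowtail[of k] by simp
    qed (simp add: w_def)
    ultimately show ?thesis by linarith
  qed
  also have "\<dots> = n/4 + n/\<beta> * (\<Sum>k<K. w k / \<beta>^k) + cap0 * (\<Sum>k<K. w k / \<beta>^k)"
    by (simp add: sum_distrib_left mult_ac)
  also have "\<dots> \<le> n/4 + n/\<beta> * 4 + cap0 * 4"
    using wsum[OF b4, of K] npos bpos cap0nn unfolding w_def
    by (intro add_mono mult_left_mono) auto
  finally have tot: "(\<Sum>v\<in>V. (f v - (xs + 1/2))^2) \<le> n/4 + 8*n/\<beta> + 4*\<beta>"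
    unfolding cap0_def by (simp add: algebra_simps)
  have "unif_var V f \<le> (\<Sum>v\<in>V. (f v - (xs + 1/2))^2) / n"
    using var_le[OF fin] n_def by simp
  also have "\<dots> \<le> (n/4 + 8*n/\<beta> + 4*\<beta>) / n"
    using tot npos by (intro divide_right_mono) auto
  also have "\<dots> = 1/4 + 8/\<beta> + 4*\<beta>/n" using npos by (simp add: field_simps)
  finally show ?thesis unfolding n_def .
qed


theorem lemma5p5:
  fixes \<epsilon> :: real
  assumes "\<epsilon> > 0"
  shows "\<exists>\<beta>::real. \<beta> > 1 \<and> (\<exists>n0::nat. \<forall>(V::nat set) E.
           simple_graph V E \<and> card V \<ge> n0 \<and> has_expansion V E \<beta> (1 / \<beta>)
           \<longrightarrow> spr V E < ereal (1/4 + \<epsilon>))"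
proof -
  define \<beta> where "\<beta> = 4 + 32/\<epsilon>"
  have b4: "\<beta> \<ge> 4" "\<beta> > 32/\<epsilon>" unfolding \<beta>_def using assms by auto
  have b8: "8/\<beta> < \<epsilon>/4"
  proof -
    have "32 < \<beta> * \<epsilon>" using b4(2) assms by (simp add: field_simps)
    then show ?thesis using b4 by (simp add: field_simps)
  qed
  define n0 where "n0 = nat \<lceil>16*\<beta>/\<epsilon>\<rceil> + nat \<lceil>4*\<beta>\<rceil> + 1"
  have "\<forall>(V::nat set) E. simple_graph V E \<and> card V \<ge> n0 \<and> has_expansion V E \<beta> (1 / \<beta>)
           \<longrightarrow> spr V E < ereal (1/4 + \<epsilon>)"
  proof (intro allI impI, elim conjE)
    fix V :: "nat set" and E
    assume sg: "simple_graph V E" and nV: "card V \<ge> n0" and ex: "has_expansion V E \<beta> (1 / \<beta>)"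
    have rn: "real (card V) \<ge> real n0" using nV by simp
    have n1: "real n0 \<ge> 16*\<beta>/\<epsilon> + 4*\<beta> + 1" unfolding n0_def by linarith
    have sdiv: "16*\<beta>/\<epsilon> \<ge> 0" using b4 assms by simp
    have nbig: "real (card V) > 4*\<beta>" using rn n1 sdiv by linarith
    have "real (card V) \<ge> 16*\<beta>/\<epsilon>" using rn n1 b4 by linarith
    then have "real (card V) * \<epsilon> \<ge> 16*\<beta>" using assms by (simp add: field_simps)
    then have t2: "4*\<beta>/real (card V) \<le> \<epsilon>/4" using nbig b4 assms by (simp add: field_simps)
    have "\<forall>f\<in>{f. lipschitz_graph V E f}. ereal (unif_var V f) \<le> ereal (1/4 + \<epsilon>/2)"
    proof
      fix f assume "f \<in> {f. lipschitz_graph V E f}"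
      then have "unif_var V f \<le> 1/4 + 8/\<beta> + 4*\<beta>/real (card V)"
        using main_bound[OF sg ex b4(1) nbig] by simp
      then show "ereal (unif_var V f) \<le> ereal (1/4 + \<epsilon>/2)" using b8 t2 by simp
    qed
    then have "spr V E \<le> ereal (1/4 + \<epsilon>/2)" unfolding spr_def by (intro SUP_least) auto
    also have "\<dots> < ereal (1/4 + \<epsilon>)" using assms by simp
    finally show "spr V E < ereal (1/4 + \<epsilon>)" .
  qed
  moreover have "\<beta> > 1" using b4 by simp
  ultimately show ?thesis by blast
qed

end
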